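(* Let $H=(V,E,C,\ell)$ be an edge-colored graph with $k$ colors, $x$ a feasible solution of the \textsc{MinECC} LP relaxation, $e=\{u,v\}\in E$ with color $c$ and $x_e=\max\{x_u^c,x_v^c\}$, and $z_0,z_1,\dots$ the color thresholds of $e$. Let $Y$ be the output of GenColorRound applied to $x$ with $I=(\frac12,\frac78)$. Suppose $x_e\in[\frac12,\frac34)$ and there are integers $1\le p\le q$ with $z_{p-1}\le x_e\le z_p\le z_q\le\frac78\le z_{q+1}$. Then $p\le5$, $q\le10$, and $\Pr[e\in\mathcal M_Y]\le\frac83B_{p,q}\,x_e$, where $B_{p,q}$ is the optimal value of the linear program in real variables $\omega_1,\dots,\omega_{10},\chi$: maximize $\frac1p+\left(\frac{q}{q+1}\cdot\frac78-\frac12\right)\chi-\sum_{j=p}^q\frac{1}{j(j+1)}\omega_j$ subject to $\omega_i\le\omega_{i+1}$ for $i=1,\dots,9$; $\chi-\omega_1\le1$; $2\chi-\omega_2-\omega_3\le1$; $3\chi-\omega_3-\omega_4-\omega_5\le1$; $4\chi-4\omega_7\le1$; $\omega_{p-1}\le1$ (this constraint is omitted when $p=1$); $\omega_p\ge1$; $\omega_q\le\frac78\chi$.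
   Context: An edge-colored graph is $H=(V,E,C,\ell)$ with colors $C=[k]$, $\ell\colon E\to C$, where every edge is a set of exactly two nodes. A node coloring $Y\colon V\to C$ makes a mistake at $e$ ($e\in\mathcal M_Y$) if some $w\in e$ has $Y[w]\ne\ell(e)$. The \textsc{MinECC} LP relaxation constraints: $\sum_{i=1}^k x_w^i=k-1$ for all $w\in V$; $x_e\ge x_w^{\ell(e)}$ for $w\in e$; $0\le x_w^i\le1$; $0\le x_e\le 1$. Color thresholds of $e$ with color $c$: for $j\in C\setminus\{c\}$ let $m_j=\min_{w\in e}x_w^j$, sorted as $m_{(1)}\le\dots\le m_{(k-1)}$; $z_0=0$, $z_i=m_{(i)}$ for $1\le i\le k-1$, and by convention $z_i=1$ for $i\ge k$. GenColorRound with interval $I$, applied to $x$: draw $\rho$ uniformly from $I$ and, independently, a uniformly random permutation $\pi$ of $[k]$; let $S_i=\{w: x_w^i<\rho\}$; for $w\in\bigcup_iS_i$ set $Y[w]=\pi(j)$ with $j$ the largest index such that $w\in S_{\pi(j)}$; other nodes get an arbitrary color. *)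

theory Defs
  imports "HOL-Analysis.Analysis" "HOL-Combinatorics.Permutations"
begin

definition edge_colored_graph ::
  "'v set \<Rightarrow> 'v set set \<Rightarrow> nat \<Rightarrow> ('v set \<Rightarrow> nat) \<Rightarrow> bool" where
  "edge_colored_graph V E k lab \<longleftrightarrow>
     finite V \<and> (\<forall>e\<in>E. e \<subseteq> V \<and> card e = 2) \<and> (\<forall>e\<in>E. lab e \<in> {1..k})"

definition minecc_lp_feasible ::
  "'v set \<Rightarrow> 'v set set \<Rightarrow> nat \<Rightarrow> ('v set \<Rightarrow> nat) \<Rightarrow> ('v \<Rightarrow> nat \<Rightarrow> real)
     \<Rightarrow> ('v set \<Rightarrow> real) \<Rightarrow> bool" where
  "minecc_lp_feasible V E k lab x xe \<longleftrightarrow>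
     (\<forall>w\<in>V. (\<Sum>i=1..k. x w i) = real k - 1) \<and>
     (\<forall>e\<in>E. \<forall>w\<in>e. xe e \<ge> x w (lab e)) \<and>
     (\<forall>w\<in>V. \<forall>i\<in>{1..k}. 0 \<le> x w i \<and> x w i \<le> 1) \<and>
     (\<forall>e\<in>E. 0 \<le> xe e \<and> xe e \<le> 1)"

definition color_thresholds ::
  "('v \<Rightarrow> nat \<Rightarrow> real) \<Rightarrow> nat \<Rightarrow> 'v set \<Rightarrow> nat \<Rightarrow> nat \<Rightarrow> real" where
  "color_thresholds x k e c i =
     (let ms = sort (map (\<lambda>j. Min ((\<lambda>w. x w j) ` e)) (filter (\<lambda>j. j \<noteq> c) [1..<k+1]))
      in if i = 0 then 0 else if i \<le> k - 1 then ms ! (i - 1) else 1)"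

text \<open>Color assigned to node w by GenColorRound for threshold rho and permutation pi;
  nodes in no S_i get the (arbitrary) default color dflt w.\<close>
definition gcr_color ::
  "('v \<Rightarrow> nat \<Rightarrow> real) \<Rightarrow> nat \<Rightarrow> ('v \<Rightarrow> nat) \<Rightarrow> real \<Rightarrow> (nat \<Rightarrow> nat) \<Rightarrow> 'v \<Rightarrow> nat" where
  "gcr_color x k dflt \<rho> \<pi> w =
     (if \<exists>j\<in>{1..k}. x w (\<pi> j) < \<rho>
      then \<pi> (GREATEST j. j \<in> {1..k} \<and> x w (\<pi> j) < \<rho>)
      else dflt w)"

text \<open>Probability that GenColorRound with interval (a,b) makes a mistake at edge e of color c:
  rho uniform on (a,b), pi uniform over permutations of {1..k}, independent.\<close>
definition gcr_mistake_prob ::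
  "('v \<Rightarrow> nat \<Rightarrow> real) \<Rightarrow> nat \<Rightarrow> ('v \<Rightarrow> nat) \<Rightarrow> real \<Rightarrow> real \<Rightarrow> 'v set \<Rightarrow> nat \<Rightarrow> real" where
  "gcr_mistake_prob x k dflt a b e c =
     (\<Sum>\<pi>\<in>{\<pi>. \<pi> permutes {1..k}}.
        measure lborel {\<rho> \<in> {a<..<b}. \<exists>w\<in>e. gcr_color x k dflt \<rho> \<pi> w \<noteq> c} / (b - a))
     / real (card {\<pi>. \<pi> permutes {1..k}})"

definition B_feasible :: "nat \<Rightarrow> nat \<Rightarrow> (nat \<Rightarrow> real) \<Rightarrow> real \<Rightarrow> bool" where
  "B_feasible p q \<omega> chi \<longleftrightarrow>
     (\<forall>i\<in>{1..9}. \<omega> i \<le> \<omega> (Suc i)) \<and>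
     chi - \<omega> 1 \<le> 1 \<and>
     2 * chi - \<omega> 2 - \<omega> 3 \<le> 1 \<and>
     3 * chi - \<omega> 3 - \<omega> 4 - \<omega> 5 \<le> 1 \<and>
     4 * chi - 4 * \<omega> 7 \<le> 1 \<and>
     (p \<noteq> 1 \<longrightarrow> \<omega> (p - 1) \<le> 1) \<and>
     \<omega> p \<ge> 1 \<and>
     \<omega> q \<le> 7/8 * chi"

definition B_objective :: "nat \<Rightarrow> nat \<Rightarrow> (nat \<Rightarrow> real) \<Rightarrow> real \<Rightarrow> real" where
  "B_objective p q \<omega> chi =
     1 / real p + (real q / (real q + 1) * (7/8) - 1/2) * chi
     - (\<Sum>j=p..q. \<omega> j / (real j * (real j + 1)))"

text \<open>Optimal value of the maximization LP (only omega_1..omega_10 occur when p \<le> 5, q \<le> 10).\<close>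
definition B_val :: "nat \<Rightarrow> nat \<Rightarrow> real" where
  "B_val p q = Sup {B_objective p q \<omega> chi | \<omega> chi. B_feasible p q \<omega> chi}"

end

theory Submission imports Defs begin


definition lastP :: "nat set \<Rightarrow> nat set \<Rightarrow> nat \<Rightarrow> (nat \<Rightarrow> nat) set" where
  "lastP S U s = {\<pi>. \<pi> permutes S \<and> (\<forall>a\<in>S. \<forall>b\<in>S. \<pi> b = s \<and> \<pi> a \<in> U - {s} \<longrightarrow> a < b)}"

lemma lastP_swap_le:
  assumes fS: "finite S" and U: "U \<subseteq> S" and c: "c \<in> U" and s: "s \<in> U"
  shows "card (lastP S U s) \<le> card (lastP S U c)"
proof (rule card_inj_on_le[where f = "\<lambda>\<pi>. Transposition.transpose c s \<circ> \<pi>"])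
  show "inj_on (\<lambda>\<pi>. Transposition.transpose c s \<circ> \<pi>) (lastP S U s)"
  proof (rule inj_onI)
    fix \<pi>1 \<pi>2 :: "nat \<Rightarrow> nat"
    assume "Transposition.transpose c s \<circ> \<pi>1 = Transposition.transpose c s \<circ> \<pi>2"
    then have "Transposition.transpose c s \<circ> (Transposition.transpose c s \<circ> \<pi>1) = Transposition.transpose c s \<circ> (Transposition.transpose c s \<circ> \<pi>2)" by simp
    then show "\<pi>1 = \<pi>2" by (simp add: comp_assoc[symmetric])
  qed
  show "finite (lastP S U c)"
    using finite_permutations[OF fS] by (rule finite_subset[rotated]) (auto simp: lastP_def)
  show "(\<lambda>\<pi>. Transposition.transpose c s \<circ> \<pi>) ` lastP S U s \<subseteq> lastP S U c"
  proof
    fix \<sigma> assume "\<sigma> \<in> (\<lambda>\<pi>. Transposition.transpose c s \<circ> \<pi>) ` lastP S U s"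
    then obtain \<pi> where \<pi>: "\<pi> \<in> lastP S U s" and \<sigma>: "\<sigma> = Transposition.transpose c s \<circ> \<pi>" by auto
    have "\<sigma> permutes S" using \<pi> U c s unfolding \<sigma> lastP_def
      by (auto intro!: permutes_compose permutes_swap_id)
    moreover have "a < b" if "a \<in> S" "b \<in> S" "\<sigma> b = c" "\<sigma> a \<in> U - {c}" for a b
    proof -
      have "\<pi> b = s" using that(3) unfolding \<sigma> by (auto simp: transpose_eq_iff)
      moreover have "\<pi> a \<in> U - {s}" using that(4) c s unfolding \<sigma> by (auto simp: transpose_eq_iff)
      ultimately show ?thesis using \<pi> that(1,2) by (auto simp: lastP_def)
    qed
    ultimately show "\<sigma> \<in> lastP S U c" by (auto simp: lastP_def)
  qed
qed

lemma lastP_card: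
  assumes fS: "finite S" and U: "U \<subseteq> S" and c: "c \<in> U"
  shows "card {\<pi>. \<pi> permutes S} \<le> card U * card (lastP S U c)"
proof -
  have fU: "finite U" using U fS finite_subset by auto
  have "{\<pi>. \<pi> permutes S} \<subseteq> (\<Union>s\<in>U. lastP S U s)"
  proof
    fix \<pi> assume "\<pi> \<in> {\<pi>. \<pi> permutes S}"
    then have p: "\<pi> permutes S" by simp
    define Pos where "Pos = {a\<in>S. \<pi> a \<in> U}"
    have "inv \<pi> c \<in> Pos" using p c U
      by (auto simp: Pos_def permutes_inverses permutes_in_image[OF permutes_inv[OF p]])
    then have ne: "Pos \<noteq> {}" by auto
    have fP: "finite Pos" using fS by (simp add: Pos_def)
    define b where "b = Max Pos"
    have bP: "b \<in> Pos" using Max_in[OF fP ne] by (simp add: b_def)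
    have "\<pi> \<in> lastP S U (\<pi> b)"
    proof -
      have "a < b" if "a \<in> S" "\<pi> a \<in> U - {\<pi> b}" for a
      proof -
        have "a \<in> Pos" using that by (auto simp: Pos_def)
        then have "a \<le> b" using fP by (simp add: b_def)
        moreover have "a \<noteq> b" using that by auto
        ultimately show ?thesis by simp
      qed
      then show ?thesis using p permutes_inj[OF p] by (auto simp: lastP_def dest: injD)
    qed
    moreover have "\<pi> b \<in> U" using bP by (simp add: Pos_def)
    ultimately show "\<pi> \<in> (\<Union>s\<in>U. lastP S U s)" by blast
  qed
  then have "card {\<pi>. \<pi> permutes S} \<le> card (\<Union>s\<in>U. lastP S U s)"
    using fU finite_permutations[OF fS]
    by (intro card_mono) (auto simp: lastP_def)
  also have "\<dots> \<le> (\<Sum>s\<in>U. card (lastP S U s))" using fU by (rule card_UN_le)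
  also have "\<dots> \<le> (\<Sum>s\<in>U. card (lastP S U c))"
    using lastP_swap_le[OF fS U c] by (intro sum_mono) auto
  finally show ?thesis by simp
qed



lemma G_ident:
  fixes Z :: "nat \<Rightarrow> real"
  assumes p: "1 \<le> p" and pq: "p \<le> q"
  shows "(\<Sum>i\<in>{p-1..<q}. (Z (Suc i) - (if i = p-1 then X else Z i)) * (real i / (real i + 1)))
    = Z q * (real q / (real q + 1)) - X * ((real p - 1) / real p) - (\<Sum>j=p..q. Z j / (real j * (real j + 1)))"
  using pq
proof (induction q rule: dec_induct)
  case base
  have "{p-1..<p} = {p-1}" using p by auto
  moreover have "real (p - 1) = real p - 1" using p by simp
  moreover have "real p > 0" using p by simp
  moreover have "real p + real p * real p > 0" using p by (simp add: add_pos_pos)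
  ultimately show ?case using p by (simp add: divide_simps) (simp add: algebra_simps)
next
  case (step n)
  have e1: "{p-1..<Suc n} = insert n {p-1..<n}" using step p by auto
  have e2: "{p..Suc n} = insert (Suc n) {p..n}" using step by auto
  have ne: "n \<noteq> p - 1" using step p by auto
  define S1 where "S1 = (\<Sum>i\<in>{p-1..<n}. (Z (Suc i) - (if i = p-1 then X else Z i)) * (real i / (real i + 1)))"
  define S2 where "S2 = (\<Sum>j=p..n. Z j / (real j * (real j + 1)))"
  have l: "(\<Sum>i\<in>{p-1..<Suc n}. (Z (Suc i) - (if i = p-1 then X else Z i)) * (real i / (real i + 1)))
     = S1 + (Z (Suc n) - Z n) * (real n / (real n + 1))"
    unfolding e1 S1_def using ne by simp
  have r: "(\<Sum>j=p..Suc n. Z j / (real j * (real j + 1))) = S2 + Z (Suc n) / (real (Suc n) * (real (Suc n) + 1))"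
    unfolding e2 S2_def by simp
  have ih: "S1 = Z n * (real n / (real n + 1)) - X * ((real p - 1) / real p) - S2"
    using step.IH unfolding S1_def S2_def .
  have "real n + 1 > 0" "real n + 2 > 0" by auto
  then show ?case unfolding l r ih by (simp add: divide_simps) (simp add: algebra_simps)
qed

lemma total_ident:
  fixes Z :: "nat \<Rightarrow> real"
  assumes p: "1 \<le> p" and pq: "p \<le> q"
  shows "(X - 1/2) + (\<Sum>i\<in>{p-1..q}. ((if i = q then 7/8 else Z (Suc i)) - (if i = p-1 then X else Z i)) * (real i / (real i + 1)))
    = X / real p + (real q / (real q + 1) * (7/8) - 1/2) - (\<Sum>j=p..q. Z j / (real j * (real j + 1)))"
proof -
  have e: "{p-1..q} = insert q {p-1..<q}" using p pq by auto
  have "(\<Sum>i\<in>{p-1..<q}. ((if i = q then 7/8 else Z (Suc i)) - (if i = p-1 then X else Z i)) * (real i / (real i + 1)))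
      = (\<Sum>i\<in>{p-1..<q}. (Z (Suc i) - (if i = p-1 then X else Z i)) * (real i / (real i + 1)))"
    by (intro sum.cong) auto
  also have "\<dots> = Z q * (real q / (real q + 1)) - X * ((real p - 1) / real p) - (\<Sum>j=p..q. Z j / (real j * (real j + 1)))"
    by (rule G_ident[OF p pq])
  finally have h: "(\<Sum>i\<in>{p-1..<q}. ((if i = q then 7/8 else Z (Suc i)) - (if i = p-1 then X else Z i)) * (real i / (real i + 1)))
    = Z q * (real q / (real q + 1)) - X * ((real p - 1) / real p) - (\<Sum>j=p..q. Z j / (real j * (real j + 1)))" .
  have ne: "q \<noteq> p - 1" using p pq by auto
  have s: "(\<Sum>i\<in>{p-1..q}. ((if i = q then 7/8 else Z (Suc i)) - (if i = p-1 then X else Z i)) * (real i / (real i + 1)))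
    = (7/8 - Z q) * (real q / (real q + 1)) + (\<Sum>i\<in>{p-1..<q}. ((if i = q then 7/8 else Z (Suc i)) - (if i = p-1 then X else Z i)) * (real i / (real i + 1)))"
    unfolding e using ne by simp
  have "real p > 0" "real q + 1 > 0" using p by auto
  then show ?thesis unfolding s h by (simp add: divide_simps) (simp add: algebra_simps)
qed



lemma omega_mono:
  assumes "\<forall>i\<in>{1..9}. \<omega> i \<le> (\<omega> (Suc i) :: real)" "1 \<le> i" "i \<le> j" "j \<le> 10"
  shows "\<omega> i \<le> \<omega> j"
  using assms(3,4)
proof (induction j rule: dec_induct)
  case base then show ?case by simp
next
  case (step n)
  then have "\<omega> n \<le> \<omega> (Suc n)" using assms(1,2) by auto
  with step show ?case by simp
qed

lemma obj_bound:
  assumes p: "1 \<le> p" "p \<le> q" "q \<le> 10" and F: "B_feasible p q \<omega> chi"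
  shows "B_objective p q \<omega> chi \<le> 4"
proof -
  have mono: "\<forall>i\<in>{1..9}. \<omega> i \<le> \<omega> (Suc i)" using F by (simp add: B_feasible_def)
  have wp: "1 \<le> \<omega> p" using F by (simp add: B_feasible_def)
  have wq: "\<omega> q \<le> 7/8 * chi" using F by (simp add: B_feasible_def)
  have c1: "chi - \<omega> 1 \<le> 1" using F by (simp add: B_feasible_def)
  have "\<omega> p \<le> \<omega> q" using omega_mono[OF mono] p by auto
  then have chipos: "chi > 0" using wp wq by linarith
  have "\<omega> 1 \<le> \<omega> q" using omega_mono[OF mono] p by auto
  have "0 \<le> (\<Sum>j=p..q. \<omega> j / (real j * (real j + 1)))"
  proof (intro sum_nonneg)
    fix j assume "j \<in> {p..q}"
    then have "\<omega> p \<le> \<omega> j" using omega_mono[OF mono] p by auto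
    then show "0 \<le> \<omega> j / (real j * (real j + 1))" using wp by simp
  qed
  moreover have "1 / real p \<le> 1" using p by simp
  moreover have qq: "real q / (real q + 1) \<le> 1" by simp
  have "real q / (real q + 1) * (7/8) - 1/2 \<le> 3/8" using mult_right_mono[OF qq, of "7/8"] by simp
  then have "(real q / (real q + 1) * (7/8) - 1/2) * chi \<le> 3/8 * chi"
    using chipos by (intro mult_right_mono) auto
  moreover have "chi \<le> 8"
    using \<open>\<omega> 1 \<le> \<omega> q\<close> wq c1 by linarith
  ultimately show ?thesis unfolding B_objective_def by linarith
qed

lemma Bval_ge:
  assumes p: "1 \<le> p" "p \<le> q" "q \<le> 10" and F: "B_feasible p q \<omega> chi"
  shows "B_objective p q \<omega> chi \<le> B_val p q"
  unfolding B_val_def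
proof (rule cSup_upper)
  show "B_objective p q \<omega> chi \<in> {B_objective p q \<omega> chi |\<omega> chi. B_feasible p q \<omega> chi}" using F by blast
  show "bdd_above {B_objective p q \<omega> chi |\<omega> chi. B_feasible p q \<omega> chi}"
    using obj_bound[OF p] by (auto intro!: bdd_aboveI[where M = 4])
qed



lemma map_insort_key: "map f (insort_key f a ys) = insort (f a) (map f ys)"
  by (induction ys) auto

lemma map_sort_key: "map f (sort_key f xs) = sort (map f xs)"
  by (induction xs) (auto simp: map_insort_key)

locale ecc =
  fixes k c :: nat and x :: "'v \<Rightarrow> nat \<Rightarrow> real" and u v :: 'v and X :: real
  assumes uv: "u \<noteq> v" and cin: "c \<in> {1..k}"
  and sumx: "\<And>w. w \<in> {u,v} \<Longrightarrow> (\<Sum>i=1..k. x w i) = real k - 1"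
  and bnd: "\<And>w i. w\<in>{u,v} \<Longrightarrow> i \<in> {1..k} \<Longrightarrow> 0 \<le> x w i \<and> x w i \<le> 1"
  and xc: "\<And>w. w\<in>{u,v} \<Longrightarrow> x w c \<le> X"
begin

definition "m j = min (x u j) (x v j)"
definition "cs = filter (\<lambda>j. j \<noteq> c) [1..<k+1]"
definition "scs = sort_key m cs"
definition "Z i = color_thresholds x k {u,v} c i"
definition "zz i = Z (Suc i)"

lemma set_scs: "set scs = {1..k} - {c}"
  by (auto simp: scs_def cs_def)

lemma distinct_scs: "distinct scs"
  by (simp add: scs_def cs_def)

lemma len_scs: "length scs = k - 1"
proof -
  have "length scs = card (set scs)" using distinct_scs by (simp add: distinct_card)
  also have "\<dots> = k - 1" using cin by (simp add: set_scs card_Diff_singleton)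
  finally show ?thesis .
qed

lemma Z_eq: "Z i = (if i = 0 then 0 else if i \<le> k-1 then m (scs!(i-1)) else 1)"
proof -
  have mm: "(\<lambda>j. Min ((\<lambda>w. x w j) ` {u,v})) = m" by (auto simp: m_def fun_eq_iff)
  have "sort (map m cs) = map m scs" by (simp add: scs_def map_sort_key)
  moreover have "length cs = k - 1" using len_scs by (simp add: scs_def)
  moreover have "Z i = (let ms = sort (map m cs) in if i = 0 then 0 else if i \<le> k - 1 then ms ! (i - 1) else 1)"
    unfolding Z_def color_thresholds_def mm cs_def by simp
  ultimately show ?thesis using len_scs by (auto simp: Let_def nth_map)
qed

lemma zz_eq: "zz i = (if i < k-1 then m (scs!i) else 1)"
  by (auto simp: zz_def Z_eq)

lemma scs_in: "i < k - 1 \<Longrightarrow> scs!i \<in> {1..k} - {c}"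
  using set_scs len_scs nth_mem by (metis)

lemma m_le1: "j \<in> {1..k} \<Longrightarrow> m j \<le> 1"
  using bnd[of u j] by (auto simp: m_def)

lemma zz_le1: "zz i \<le> 1"
  using scs_in[of i] m_le1 by (auto simp: zz_eq)

lemma sorted_ms: "sorted (map m scs)"
  by (simp add: scs_def)

lemma zz_mono: assumes "i \<le> j" shows "zz i \<le> zz j"
proof (cases "j < k - 1")
  case True
  then have "(map m scs)!i \<le> (map m scs)!j"
    using sorted_ms assms len_scs by (intro sorted_nth_mono) auto
  then show ?thesis using True assms len_scs by (simp add: zz_eq)
next
  case False
  then show ?thesis using zz_le1[of i] by (simp add: zz_eq)
qed

definition "N i = (if x u (scs!i) \<le> x v (scs!i) then u else v)"

lemma node_sum:
  assumes w: "w \<in> {u,v}" and J: "J \<subseteq> {1..k} - {c}"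
  shows "(\<Sum>j\<in>J. 1 - x w j) \<le> x w c"
proof -
  have nn: "\<And>j. j \<in> {1..k} - {c} \<Longrightarrow> 0 \<le> 1 - x w j" using bnd[OF w] by auto
  have "(\<Sum>j\<in>J. 1 - x w j) \<le> (\<Sum>j\<in>{1..k} - {c}. 1 - x w j)"
    using J nn by (intro sum_mono2) auto
  also have "\<dots> = real (k - 1) - (\<Sum>j\<in>{1..k} - {c}. x w j)"
    using cin by (simp add: sum_subtractf card_Diff_singleton)
  also have "(\<Sum>j\<in>{1..k}. x w j) = x w c + (\<Sum>j\<in>{1..k} - {c}. x w j)"
    using cin by (simp add: sum.remove)
  then have "(\<Sum>j\<in>{1..k} - {c}. x w j) = real k - 1 - x w c" using sumx[OF w] by simp
  finally show ?thesis using cin by (simp add: of_nat_diff)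
qed

lemma zz_node: assumes "i < k - 1" "N i = w" shows "zz i = x w (scs!i)"
  using assms uv by (auto simp: zz_eq m_def N_def split: if_splits)

lemma L:
  assumes w: "w \<in> {u,v}" and fQ: "finite Q" and QN: "\<forall>i\<in>Q. i < k - 1 \<longrightarrow> N i = w"
  shows "(\<Sum>i\<in>Q. 1 - zz i) \<le> X"
proof -
  let ?Q = "Q \<inter> {..<k-1}"
  have "(\<Sum>i\<in>Q. 1 - zz i) = (\<Sum>i\<in>?Q. 1 - zz i)"
    using fQ by (intro sum.mono_neutral_right) (auto simp: zz_eq)
  also have "\<dots> = (\<Sum>i\<in>?Q. 1 - x w (scs!i))"
    using QN zz_node by (intro sum.cong) auto
  also have "\<dots> = (\<Sum>j\<in>(\<lambda>i. scs!i) ` ?Q. 1 - x w j)"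
  proof (rule sum.reindex[symmetric, unfolded comp_def])
    show "inj_on ((!) scs) ?Q"
      using distinct_scs len_scs inj_on_nth[of scs ?Q] by auto
  qed
  also have "\<dots> \<le> x w c"
    using scs_in by (intro node_sum[OF w]) auto
  also have "\<dots> \<le> X" using xc[OF w] .
  finally show ?thesis .
qed

lemma PH:
  assumes fQ: "finite Q" and r: "2 * r \<le> card Q + 1"
  shows "\<exists>Q'\<subseteq>Q. card Q' = r \<and> (\<Sum>i\<in>Q'. 1 - zz i) \<le> X"
proof -
  define Qu where "Qu = {i\<in>Q. i < k - 1 \<longrightarrow> N i = u}"
  define Qv where "Qv = Q - Qu"
  have QvN: "\<forall>i\<in>Qv. i < k - 1 \<longrightarrow> N i = v" by (auto simp: Qv_def Qu_def N_def)
  have "card Qu + card Qv = card Q"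
    using fQ by (simp add: Qv_def Qu_def card_Diff_subset) (metis (no_types, lifting) card_mono le_add_diff_inverse mem_Collect_eq subsetI)
  then have "r \<le> card Qu \<or> r \<le> card Qv" using r by linarith
  then show ?thesis
  proof
    assume "r \<le> card Qu"
    then obtain T where T: "T \<subseteq> Qu" "card T = r" by (metis obtain_subset_with_card_n)
    have "(\<Sum>i\<in>T. 1 - zz i) \<le> X"
      using T fQ by (intro L[of u]) (auto simp: Qu_def intro: finite_subset)
    then show ?thesis using T by (auto simp: Qu_def)
  next
    assume "r \<le> card Qv"
    then obtain T where T: "T \<subseteq> Qv" "card T = r" by (metis obtain_subset_with_card_n)
    have "(\<Sum>i\<in>T. 1 - zz i) \<le> X"
      using T fQ QvN by (intro L[of v]) (auto simp: Qv_def intro: finite_subset)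
    then show ?thesis using T by (auto simp: Qv_def)
  qed
qed

lemma sum_low:
  assumes "Q' \<subseteq> {..<n}" "card Q' = r" "\<forall>i\<in>Q'. zz i \<le> t"
  shows "real r * (1 - t) \<le> (\<Sum>i\<in>Q'. 1 - zz i)"
proof -
  have "(\<Sum>i\<in>Q'. 1 - t) \<le> (\<Sum>i\<in>Q'. 1 - zz i)" using assms by (intro sum_mono) auto
  then show ?thesis using assms by simp
qed

lemma C1: "1 - zz 0 \<le> X"
proof -
  obtain Q' where "Q' \<subseteq> {..<1}" "card Q' = 1" "(\<Sum>i\<in>Q'. 1 - zz i) \<le> X"
    using PH[of "{..<1}" 1] by auto
  then have "Q' = {0}" by (auto simp: card_1_singleton_iff)
  with \<open>(\<Sum>i\<in>Q'. 1 - zz i) \<le> X\<close> show ?thesis by simp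
qed

lemma C4: "4 - 4 * zz 6 \<le> X"
proof -
  obtain Q' where Q: "Q' \<subseteq> {..<7}" "card Q' = 4" "(\<Sum>i\<in>Q'. 1 - zz i) \<le> X"
    using PH[of "{..<7}" 4] by auto
  have "real 4 * (1 - zz 6) \<le> (\<Sum>i\<in>Q'. 1 - zz i)"
    using Q zz_mono by (intro sum_low[of Q' 7]) auto
  then show ?thesis using Q by simp
qed

lemma C5: assumes "zz 4 \<le> X" shows "3 * (1 - X) \<le> X"
proof -
  obtain Q' where Q: "Q' \<subseteq> {..<5}" "card Q' = 3" "(\<Sum>i\<in>Q'. 1 - zz i) \<le> X"
    using PH[of "{..<5}" 3] by auto
  have "real 3 * (1 - X) \<le> (\<Sum>i\<in>Q'. 1 - zz i)"
  proof (rule sum_low[of Q' 5])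
    show "\<forall>i\<in>Q'. zz i \<le> X"
    proof
      fix i assume "i \<in> Q'" then have "i \<le> 4" using Q by auto
      then show "zz i \<le> X" using zz_mono[of i 4] assms by simp
    qed
  qed (use Q in auto)
  then show ?thesis using Q by simp
qed

lemma C6: assumes "zz 10 \<le> 7/8" shows "3/4 \<le> X"
proof -
  obtain Q' where Q: "Q' \<subseteq> {..<11}" "card Q' = 6" "(\<Sum>i\<in>Q'. 1 - zz i) \<le> X"
    using PH[of "{..<11}" 6] by auto
  have "real 6 * (1 - 7/8) \<le> (\<Sum>i\<in>Q'. 1 - zz i)"
  proof (rule sum_low[of Q' 11])
    show "\<forall>i\<in>Q'. zz i \<le> 7/8"
    proof
      fix i assume "i \<in> Q'" then have "i \<le> 10" using Q by auto
      then show "zz i \<le> 7/8" using zz_mono[of i 10] assms by simp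
    qed
  qed (use Q in auto)
  then show ?thesis using Q by simp
qed

lemma sum_split_zz:
  assumes "Q' \<subseteq> Q" "finite Q"
  shows "(\<Sum>i\<in>Q'. 1 - zz i) = real (card Q') - ((\<Sum>i\<in>Q. zz i) - (\<Sum>i\<in>Q - Q'. zz i))"
  using assms by (simp add: sum_subtractf sum_diff finite_subset)

lemma C2: "2 - zz 1 - zz 2 \<le> X"
proof -
  obtain Q' where Q: "Q' \<subseteq> {..<3}" "card Q' = 2" "(\<Sum>i\<in>Q'. 1 - zz i) \<le> X"
    using PH[of "{..<3}" 2] by auto
  have "card ({..<3} - Q') = 1" using Q by (simp add: card_Diff_subset finite_subset)
  then obtain a where a: "{..<3::nat} - Q' = {a}" by (auto simp: card_1_singleton_iff)
  have "zz 0 \<le> zz a" by (rule zz_mono) simp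
  moreover have "(\<Sum>i\<in>{..<3::nat}. zz i) = zz 0 + zz 1 + zz 2" by (simp add: eval_nat_numeral)
  ultimately show ?thesis using Q sum_split_zz[of Q' "{..<3}"] a by simp
qed

lemma C3: "3 - zz 2 - zz 3 - zz 4 \<le> X"
proof -
  obtain Q' where Q: "Q' \<subseteq> {..<5}" "card Q' = 3" "(\<Sum>i\<in>Q'. 1 - zz i) \<le> X"
    using PH[of "{..<5}" 3] by auto
  have "card ({..<5} - Q') = 2" using Q by (simp add: card_Diff_subset finite_subset)
  then obtain a b where ab: "{..<5::nat} - Q' = {a,b}" "a < b"
    by (auto simp: card_2_iff) (metis insert_commute linorder_neqE_nat)
  have "zz 0 \<le> zz a" by (rule zz_mono) simp
  moreover have "zz 1 \<le> zz b" using ab by (intro zz_mono) simp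
  moreover have "(\<Sum>i\<in>{..<5::nat}. zz i) = zz 0 + zz 1 + zz 2 + zz 3 + zz 4"
    by (simp add: eval_nat_numeral)
  ultimately show ?thesis using Q sum_split_zz[of Q' "{..<5}"] ab by simp
qed

end

locale ecc2 = ecc k c x u v X for k c and x :: "'v \<Rightarrow> nat \<Rightarrow> real" and u v :: 'v and X +
  fixes p q :: nat and dflt :: "'v \<Rightarrow> nat"
  assumes p1: "1 \<le> p" and pq: "p \<le> q"
    and hX1: "1/2 \<le> X" and hX2: "X < 3/4"
    and hZ1: "Z (p - 1) \<le> X" and hZ2: "X \<le> Z p"
    and hZq: "Z q \<le> 7/8" and hZq1: "7/8 \<le> Z (Suc q)"
begin

definition "aa i = (if i = p - 1 then X else Z i)"
definition "bb i = (if i = q then 7/8 else Z (Suc i))"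
definition "T i = {j\<in>{1..k} - {c}. m j < bb i}"
definition "P i = lastP {1..k} (insert c (T i)) c"
definition "A \<pi> = {\<rho>\<in>{1/2<..<7/8}. \<exists>w\<in>{u,v}. gcr_color x k dflt \<rho> \<pi> w \<noteq> c}"

lemma Z_zz: "1 \<le> i \<Longrightarrow> Z i = zz (i - 1)"
  by (simp add: zz_def)

lemma Z_mono: "1 \<le> i \<Longrightarrow> i \<le> j \<Longrightarrow> Z i \<le> Z j"
  using zz_mono[of "i - 1" "j - 1"] by (simp add: Z_zz)

lemma Z_le1: "Z i \<le> 1"
proof (cases "i = 0")
  case True then show ?thesis by (simp add: Z_eq)
next
  case False then show ?thesis using zz_le1[of "i-1"] Z_zz[of i] by simp
qed

lemma bb_le_zz: "i \<in> {p-1..q} \<Longrightarrow> bb i \<le> zz i"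
  using hZq1 by (auto simp: bb_def zz_def)

lemma card_T: assumes i: "i \<in> {p-1..q}" shows "card (T i) \<le> i"
proof -
  have "T i \<subseteq> (\<lambda>i'. scs ! i') ` {..<i}"
  proof
    fix j assume j: "j \<in> T i"
    then have "j \<in> set scs" by (simp add: T_def set_scs)
    then obtain i' where i': "i' < length scs" "scs ! i' = j" by (metis in_set_conv_nth)
    have "i' < i"
    proof (rule ccontr)
      assume "\<not> i' < i"
      then have "zz i \<le> zz i'" by (intro zz_mono) simp
      also have "zz i' = m j" using i' len_scs by (simp add: zz_eq)
      also have "\<dots> < bb i" using j by (simp add: T_def)
      also have "\<dots> \<le> zz i" using bb_le_zz[OF i] .
      finally show False by simp
    qed
    then show "j \<in> (\<lambda>i'. scs ! i') ` {..<i}" using i' by auto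
  qed
  then have "card (T i) \<le> card ((\<lambda>i'. scs ! i') ` {..<i})" by (intro card_mono) auto
  also have "\<dots> \<le> card {..<i}" by (rule card_image_le) simp
  finally show ?thesis by simp
qed

lemma aa_ge: assumes "i \<in> {p-1..q}" shows "X \<le> aa i"
proof (cases "i = p - 1")
  case True then show ?thesis by (simp add: aa_def)
next
  case False
  then have "p \<le> i" using assms p1 by auto
  then show ?thesis using False hZ2 Z_mono[of p i] p1 by (simp add: aa_def)
qed

lemma aa_le_bb: assumes "i \<in> {p-1..q}" shows "aa i \<le> bb i"
proof -
  have "q \<noteq> p - 1" using p1 pq by auto
  then show ?thesis using assms hZ2 hZq Z_mono[of i "Suc i"] p1
    by (auto simp: aa_def bb_def)
qed

lemma bb_le1: "bb i \<le> 1"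
  using Z_le1 by (simp add: bb_def)

lemma cover:
  assumes "X < \<rho>" "\<rho> < 7/8"
  shows "\<exists>i\<in>{p-1..q}. aa i < \<rho> \<and> \<rho> \<le> bb i"
proof -
  define S where "S = {i\<in>{p-1..q}. aa i < \<rho>}"
  have "p - 1 \<in> S" using assms pq by (simp add: S_def aa_def)
  then have ne: "S \<noteq> {}" by auto
  have fS: "finite S" by (simp add: S_def)
  define i0 where "i0 = Max S"
  have i0S: "i0 \<in> S" using Max_in[OF fS ne] by (simp add: i0_def)
  have "\<rho> \<le> bb i0"
  proof (cases "i0 = q")
    case True then show ?thesis using assms by (simp add: bb_def)
  next
    case False
    then have "Suc i0 \<in> {p-1..q}" using i0S by (auto simp: S_def)
    moreover have "Suc i0 \<notin> S" using Max_ge[OF fS, of "Suc i0"] by (auto simp: i0_def)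
    moreover have "Suc i0 \<noteq> p - 1" using i0S by (auto simp: S_def)
    ultimately have "\<rho> \<le> Z (Suc i0)" by (auto simp: S_def aa_def)
    then show ?thesis using False by (simp add: bb_def)
  qed
  then show ?thesis using i0S by (auto simp: S_def)
qed

lemma no_mistake:
  assumes i: "i \<in> {p-1..q}" and \<pi>: "\<pi> \<in> P i" and r: "aa i < \<rho>" "\<rho> \<le> bb i" and w: "w \<in> {u,v}"
  shows "gcr_color x k dflt \<rho> \<pi> w = c"
proof -
  have perm: "\<pi> permutes {1..k}" using \<pi> by (simp add: P_def lastP_def)
  define b where "b = inv \<pi> c"
  have b1: "b \<in> {1..k}" unfolding b_def
    by (simp only: permutes_in_image[OF permutes_inv[OF perm]]) (rule cin)
  have b: "b \<in> {1..k}" "\<pi> b = c" using b1 by (auto simp: b_def permutes_inverses[OF perm])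
  have "x w c < \<rho>" using xc[OF w] aa_ge[OF i] r by linarith
  then have ex: "\<exists>j\<in>{1..k}. x w (\<pi> j) < \<rho>" using b by auto
  have "(GREATEST j. j \<in> {1..k} \<and> x w (\<pi> j) < \<rho>) = b"
  proof (rule Greatest_equality)
    show "b \<in> {1..k} \<and> x w (\<pi> b) < \<rho>" using b \<open>x w c < \<rho>\<close> by simp
    fix y assume y: "y \<in> {1..k} \<and> x w (\<pi> y) < \<rho>"
    show "y \<le> b"
    proof (cases "\<pi> y = c")
      case True
      then have "y = b" using b permutes_inj[OF perm] by (auto dest: injD)
      then show ?thesis by simp
    next
      case False
      have piy: "\<pi> y \<in> {1..k}" using y by (simp only: permutes_in_image[OF perm])
      have "m (\<pi> y) \<le> x w (\<pi> y)" using w by (auto simp: m_def)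
      then have "\<pi> y \<in> T i" using y r False piy by (auto simp: T_def)
      then have "y < b" using \<pi> y b False by (auto simp: P_def lastP_def)
      then show ?thesis by simp
    qed
  qed
  then show ?thesis using ex b by (simp add: gcr_color_def)
qed

end

context ecc2
begin

lemma meas_A:
  assumes perm: "\<pi> permutes {1..k}"
  shows "measure lborel (A \<pi>) \<le> (X - 1/2) + (\<Sum>i\<in>{p-1..q}. if \<pi> \<in> P i then 0 else bb i - aa i)"
proof -
  define I where "I = {i\<in>{p-1..q}. \<pi> \<notin> P i}"
  define R where "R = {1/2<..X} \<union> (\<Union>i\<in>I. {aa i<..bb i})"
  have sub: "A \<pi> \<subseteq> R"
  proof
    fix \<rho> assume "\<rho> \<in> A \<pi>"
    then have r: "1/2 < \<rho>" "\<rho> < 7/8" and w: "\<exists>w\<in>{u,v}. gcr_color x k dflt \<rho> \<pi> w \<noteq> c"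
      by (auto simp: A_def)
    show "\<rho> \<in> R"
    proof (cases "\<rho> \<le> X")
      case True then show ?thesis using r by (simp add: R_def)
    next
      case False
      then obtain i where i: "i\<in>{p-1..q}" "aa i < \<rho>" "\<rho> \<le> bb i" using cover r by force
      have "\<pi> \<notin> P i" using no_mistake[OF i(1) _ i(2,3)] w by blast
      then show ?thesis using i by (auto simp: R_def I_def)
    qed
  qed
  have fI: "finite I" by (simp add: I_def)
  have Rsets: "R \<in> sets lborel" unfolding R_def using fI by (intro sets.Un sets.finite_UN) auto
  have RI: "R \<subseteq> {0<..1}"
  proof -
    have "{aa i<..bb i} \<subseteq> {0<..1}" if "i \<in> I" for i
      using that aa_ge[of i] bb_le1[of i] hX1 by (auto simp: I_def)
    moreover have "{1/2<..X} \<subseteq> {0<..(1::real)}" using hX2 by auto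
    ultimately show ?thesis by (auto simp: R_def)
  qed
  have Rf: "R \<in> fmeasurable lborel"
    by (rule fmeasurableI2[OF _ RI Rsets]) (simp add: fmeasurable_def)
  have m1: "measure lborel (A \<pi>) \<le> measure lborel R"
  proof (cases "A \<pi> \<in> sets lborel")
    case True show ?thesis by (rule measure_mono_fmeasurable[OF sub True Rf])
  next
    case False then show ?thesis by (simp add: measure_notin_sets)
  qed
  have m2: "measure lborel R \<le> measure lborel {1/2<..X} + measure lborel (\<Union>i\<in>I. {aa i<..bb i})"
    unfolding R_def using fI by (intro measure_Un_le) auto
  have m3: "measure lborel (\<Union>i\<in>I. {aa i<..bb i}) \<le> (\<Sum>i\<in>I. measure lborel {aa i<..bb i})"
    using fI by (intro measure_UNION_le) auto
  have m4: "(\<Sum>i\<in>I. measure lborel {aa i<..bb i}) = (\<Sum>i\<in>I. bb i - aa i)"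
    using aa_le_bb by (intro sum.cong) (auto simp: I_def)
  have m5: "(\<Sum>i\<in>I. bb i - aa i) = (\<Sum>i\<in>{p-1..q}. if \<pi> \<in> P i then 0 else bb i - aa i)"
    unfolding I_def by (subst sum.inter_filter) (auto intro!: sum.cong)
  have m6: "measure lborel {1/2<..X} = X - 1/2" using hX1 by simp
  show ?thesis using m1 m2 m3 m4 m5 m6 by linarith
qed

definition "Perms = {\<pi>. \<pi> permutes {1..k}}"

lemma fin_Perms: "finite Perms"
  by (simp add: Perms_def finite_permutations)

lemma card_Perms_pos: "card Perms > 0"
proof -
  have "id \<in> Perms" by (simp add: Perms_def)
  then show ?thesis using fin_Perms by (auto simp: card_gt_0_iff)
qed

lemma P_sub: "P i \<subseteq> Perms"
  by (auto simp: P_def lastP_def Perms_def)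

lemma card_P: assumes i: "i \<in> {p-1..q}"
  shows "real (card Perms) \<le> (real i + 1) * real (card (P i))"
proof -
  have fT: "finite (T i)" by (simp add: T_def)
  have cT: "c \<notin> T i" by (simp add: T_def)
  have "card Perms \<le> card (insert c (T i)) * card (P i)"
    unfolding Perms_def P_def using cin by (intro lastP_card) (auto simp: T_def)
  also have "card (insert c (T i)) = card (T i) + 1" using fT cT by simp
  finally have "card Perms \<le> (card (T i) + 1) * card (P i)" .
  also have "\<dots> \<le> (i + 1) * card (P i)" using card_T[OF i] by (intro mult_right_mono) auto
  finally have "card Perms \<le> (i + 1) * card (P i)" .
  then show ?thesis by (metis of_nat_1 of_nat_add of_nat_le_iff of_nat_mult)
qed

lemma prob_bound:
  "gcr_mistake_prob x k dflt (1/2) (7/8) {u,v} c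
     \<le> 8/3 * ((X - 1/2) + (\<Sum>i\<in>{p-1..q}. (bb i - aa i) * (real i / (real i + 1))))"
proof -
  define NN where "NN = real (card Perms)"
  have NN: "NN > 0" using card_Perms_pos by (simp add: NN_def)
  define K where "K = (X - 1/2) + (\<Sum>i\<in>{p-1..q}. (bb i - aa i) * (real i / (real i + 1)))"
  have eqA: "{\<rho> \<in> {1/2<..<7/8}. \<exists>w\<in>{u,v}. gcr_color x k dflt \<rho> \<pi> w \<noteq> c} = A \<pi>" for \<pi>
    by (simp add: A_def)
  have "(\<Sum>\<pi>\<in>Perms. measure lborel (A \<pi>))
      \<le> (\<Sum>\<pi>\<in>Perms. (X - 1/2) + (\<Sum>i\<in>{p-1..q}. if \<pi> \<in> P i then 0 else bb i - aa i))"
    using meas_A by (intro sum_mono) (auto simp: Perms_def)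
  also have "\<dots> = NN * (X - 1/2) + (\<Sum>i\<in>{p-1..q}. \<Sum>\<pi>\<in>Perms. if \<pi> \<in> P i then 0 else bb i - aa i)"
    by (simp add: sum.distrib NN_def sum.swap[of _ Perms])
  also have "(\<Sum>i\<in>{p-1..q}. \<Sum>\<pi>\<in>Perms. if \<pi> \<in> P i then 0 else bb i - aa i)
      = (\<Sum>i\<in>{p-1..q}. (bb i - aa i) * (NN - real (card (P i))))"
  proof (rule sum.cong)
    fix i assume "i \<in> {p-1..q}"
    have "(\<Sum>\<pi>\<in>Perms. if \<pi> \<in> P i then 0 else bb i - aa i) = (\<Sum>\<pi>\<in>Perms - P i. bb i - aa i)"
      using fin_Perms by (intro sum.mono_neutral_cong_right) auto
    also have "\<dots> = (bb i - aa i) * real (card (Perms - P i))" by simp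
    also have "card (Perms - P i) = card Perms - card (P i)"
      using P_sub fin_Perms by (intro card_Diff_subset) (auto intro: finite_subset)
    also have "real (card Perms - card (P i)) = NN - real (card (P i))"
      using card_mono[OF fin_Perms P_sub] by (simp add: NN_def of_nat_diff)
    finally show "(\<Sum>\<pi>\<in>Perms. if \<pi> \<in> P i then 0 else bb i - aa i) = (bb i - aa i) * (NN - real (card (P i)))" .
  qed simp
  also have "(\<Sum>i\<in>{p-1..q}. (bb i - aa i) * (NN - real (card (P i))))
      \<le> (\<Sum>i\<in>{p-1..q}. (bb i - aa i) * (NN * (real i / (real i + 1))))"
  proof (rule sum_mono)
    fix i assume i: "i \<in> {p-1..q}"
    have "NN \<le> (real i + 1) * real (card (P i))" using card_P[OF i] by (simp add: NN_def)
    then have "NN / (real i + 1) \<le> real (card (P i))" by (simp add: field_simps)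
    moreover have "NN * (real i / (real i + 1)) = NN - NN / (real i + 1)"
      by (simp add: field_simps)
    ultimately have "NN - real (card (P i)) \<le> NN * (real i / (real i + 1))" by linarith
    then show "(bb i - aa i) * (NN - real (card (P i))) \<le> (bb i - aa i) * (NN * (real i / (real i + 1)))"
      using aa_le_bb[OF i] by (intro mult_left_mono) auto
  qed
  finally have S: "(\<Sum>\<pi>\<in>Perms. measure lborel (A \<pi>)) \<le> NN * K"
    by (simp add: K_def algebra_simps sum_distrib_left)
  have "gcr_mistake_prob x k dflt (1/2) (7/8) {u,v} c = ((\<Sum>\<pi>\<in>Perms. measure lborel (A \<pi>)) / (3/8)) / NN"
    unfolding gcr_mistake_prob_def eqA Perms_def[symmetric] NN_def
    by (simp only: sum_divide_distrib[symmetric]) simp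
  also have "\<dots> \<le> (NN * K / (3/8)) / NN"
    using S NN by (intro divide_right_mono) auto
  also have "\<dots> = 8/3 * K" using NN by simp
  finally show ?thesis by (simp add: K_def)
qed

end


theorem lemma5:
  fixes V :: "'v set" and E :: "'v set set" and k :: nat and lab :: "'v set \<Rightarrow> nat"
    and x :: "'v \<Rightarrow> nat \<Rightarrow> real" and xe :: "'v set \<Rightarrow> real"
    and dflt :: "'v \<Rightarrow> nat" and u v :: 'v and c p q :: nat
  assumes "edge_colored_graph V E k lab"
    and "minecc_lp_feasible V E k lab x xe"
    and "\<forall>w\<in>V. dflt w \<in> {1..k}"
    and "{u, v} \<in> E" and "lab {u, v} = c"
    and "xe {u, v} = max (x u c) (x v c)"
    and "1/2 \<le> xe {u, v}" and "xe {u, v} < 3/4"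
    and "1 \<le> p" and "p \<le> q"
    and "color_thresholds x k {u, v} c (p - 1) \<le> xe {u, v}"
    and "xe {u, v} \<le> color_thresholds x k {u, v} c p"
    and "color_thresholds x k {u, v} c p \<le> color_thresholds x k {u, v} c q"
    and "color_thresholds x k {u, v} c q \<le> 7/8"
    and "7/8 \<le> color_thresholds x k {u, v} c (q + 1)"
  shows "p \<le> 5 \<and> q \<le> 10 \<and>
         gcr_mistake_prob x k dflt (1/2) (7/8) {u, v} c \<le> 8/3 * B_val p q * xe {u, v}"
proof -
  note G = assms(1)[unfolded edge_colored_graph_def]
  note F = assms(2)[unfolded minecc_lp_feasible_def]
  define X where "X = xe {u, v}"
  have uvV: "u \<in> V" "v \<in> V" using G assms(4) by auto
  have "card {u, v} = 2" using G assms(4) by auto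
  then have uv: "u \<noteq> v" by (cases "u = v") auto
  have cin: "c \<in> {1..k}" using G assms(4,5) by auto
  interpret E0: ecc k c x u v X
  proof
    show "u \<noteq> v" by (rule uv)
    show "c \<in> {1..k}" by (rule cin)
    fix w assume w: "w \<in> {u,v}"
    then have "w \<in> V" using uvV by auto
    then show "(\<Sum>i=1..k. x w i) = real k - 1" using F by auto
    fix i assume "i \<in> {1..k}"
    then show "0 \<le> x w i \<and> x w i \<le> 1" using F \<open>w \<in> V\<close> by auto
  next
    fix w assume "w \<in> {u,v}" then show "x w c \<le> X" using assms(6) by (auto simp: X_def)
  qed
  have Zd: "\<And>i. E0.Z i = color_thresholds x k {u, v} c i" by (simp add: E0.Z_def)
  interpret E: ecc2 k c x u v X p q dflt
    by unfold_locales (use assms in \<open>auto simp: Zd X_def\<close>)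
  have Xpos: "X > 0" using assms(7) by (simp add: X_def)
  have p5: "p \<le> 5"
  proof (rule ccontr)
    assume "\<not> p \<le> 5"
    then have "5 \<le> p - 1" by simp
    then have "E0.Z 5 \<le> X" using E.Z_mono[of 5 "p - 1"] E.hZ1 by simp
    then have "E0.zz 4 \<le> X" by (simp add: E0.zz_def numeral_eq_Suc)
    then have "3 * (1 - X) \<le> X" by (rule E0.C5)
    then have "3 - 3 * X \<le> X" by (simp add: algebra_simps)
    then show False using E.hX2 by linarith
  qed
  have q10: "q \<le> 10"
  proof (rule ccontr)
    assume "\<not> q \<le> 10"
    then have "11 \<le> q" by simp
    then have "E0.Z 11 \<le> 7/8" using E.Z_mono[of 11 q] E.hZq by simp
    then have "E0.zz 10 \<le> 7/8" by (simp add: E0.zz_def numeral_eq_Suc)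
    then have "3/4 \<le> X" by (rule E0.C6)
    then show False using E.hX2 by linarith
  qed
  define \<omega> where "\<omega> j = E0.Z j / X" for j
  define chi where "chi = 1 / X"
  have zzZ: "E0.zz i = E0.Z (Suc i)" for i by (simp add: E0.zz_def)
  have feas: "B_feasible p q \<omega> chi"
    unfolding B_feasible_def
  proof (intro conjI)
    show "\<forall>i\<in>{1..9}. \<omega> i \<le> \<omega> (Suc i)"
      using E.Z_mono Xpos by (auto simp: \<omega>_def intro!: divide_right_mono)
    have le1: "a / X \<le> 1" if "a \<le> X" for a using that Xpos by simp
    have z1: "E0.zz 0 = E0.Z 1" "E0.zz 1 = E0.Z 2" "E0.zz 2 = E0.Z 3" "E0.zz 3 = E0.Z 4"
      "E0.zz 4 = E0.Z 5" "E0.zz 6 = E0.Z 7" by (simp_all add: zzZ numeral_eq_Suc)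
    have "chi - \<omega> 1 = (1 - E0.Z 1) / X" by (simp add: \<omega>_def chi_def diff_divide_distrib)
    then show "chi - \<omega> 1 \<le> 1" using le1 E0.C1 z1 by simp
    have "2 * chi - \<omega> 2 - \<omega> 3 = (2 - E0.Z 2 - E0.Z 3) / X" by (simp add: \<omega>_def chi_def diff_divide_distrib)
    then show "2 * chi - \<omega> 2 - \<omega> 3 \<le> 1" using le1 E0.C2 z1 by simp
    have "3 * chi - \<omega> 3 - \<omega> 4 - \<omega> 5 = (3 - E0.Z 3 - E0.Z 4 - E0.Z 5) / X"
      by (simp add: \<omega>_def chi_def diff_divide_distrib)
    then show "3 * chi - \<omega> 3 - \<omega> 4 - \<omega> 5 \<le> 1" using le1 E0.C3 z1 by simp
    have "4 * chi - 4 * \<omega> 7 = (4 - 4 * E0.Z 7) / X" by (simp add: \<omega>_def chi_def diff_divide_distrib)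
    then show "4 * chi - 4 * \<omega> 7 \<le> 1" using le1 E0.C4 z1 by simp
    show "p \<noteq> 1 \<longrightarrow> \<omega> (p - 1) \<le> 1" using E.hZ1 Xpos by (simp add: \<omega>_def)
    show "1 \<le> \<omega> p" using E.hZ2 Xpos by (simp add: \<omega>_def)
    show "\<omega> q \<le> 7/8 * chi" using E.hZq Xpos by (simp add: \<omega>_def chi_def field_simps)
  qed
  have objX: "X * B_objective p q \<omega> chi
      = X / real p + (real q / (real q + 1) * (7/8) - 1/2) - (\<Sum>j=p..q. E0.Z j / (real j * (real j + 1)))"
  proof -
    have "X * (\<Sum>j=p..q. \<omega> j / (real j * (real j + 1))) = (\<Sum>j=p..q. E0.Z j / (real j * (real j + 1)))"
      unfolding sum_distrib_left using Xpos by (intro sum.cong) (auto simp: \<omega>_def)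
    moreover define a where "a = real q / (real q + 1) * (7/8) - 1/2"
    ultimately show ?thesis using Xpos unfolding B_objective_def chi_def a_def[symmetric]
      by (simp add: right_diff_distrib distrib_left)
  qed
  have K: "(X - 1/2) + (\<Sum>i\<in>{p-1..q}. (E.bb i - E.aa i) * (real i / (real i + 1))) = X * B_objective p q \<omega> chi"
    unfolding objX E.aa_def E.bb_def by (rule total_ident[OF assms(9,10)])
  have "gcr_mistake_prob x k dflt (1/2) (7/8) {u, v} c \<le> 8/3 * (X * B_objective p q \<omega> chi)"
    using E.prob_bound unfolding K .
  also have "\<dots> \<le> 8/3 * (X * B_val p q)"
    using Bval_ge[OF assms(9,10) q10 feas] Xpos by simp
  finally show ?thesis using p5 q10 by (simp add: X_def algebra_simps)
qed

end
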